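(* Let $\mathcal{G}=(\mathcal{V},\mathcal{E})$ be a symmetric connected graph with $N$ nodes and spectral gap $\lambda_1$, let $q\in(0,1)$, and run the BGA on $\mathcal{G}$ with mixing parameter $q$ from an initial condition $x(0)\in[0,L]^{\mathcal{V}}$. Then there exists a constant $C>0$ (depending on the initial condition $x(0)$) such that $$\mathbb{E}[\beta(\infty)]\le C\,\frac{q}{1-q}\,\frac{\deg_{\max}^2}{N\lambda_1},$$ where $\beta(t)=|x_{\mathrm{ave}}(t)-x_{\mathrm{ave}}(0)|^2$ and $\mathbb{E}[\beta(\infty)]:=\lim_{t\to\infty}\mathbb{E}[\beta(t)]$.
   Context: Graph and neighborhoods: $\mathcal{G}=(\mathcal{V},\mathcal{E})$ with $\mathcal{E}\subset\mathcal{V}\times\mathcal{V}$ and $N=|\mathcal{V}|$. For $v\in\mathcal{V}$, the out-neighborhood is $\mathcal{N}^+_v=\{u\in\mathcal{V}:(u,v)\in\mathcal{E}\}$ and the in-neighborhood is $\mathcal{N}^-_v=\{u\in\mathcal{V}:(v,u)\in\mathcal{E}\}$; $\deg^\pm_v=|\mathcal{N}^\pm_v|$, $\deg^\pm_{\max}=\max_v\deg^\pm_v$, $\deg_{\max}=\max\{\deg^-_{\max},\deg^+_{\max}\}$. The graph is symmetric if $\mathcal{N}^+_v=\mathcal{N}^-_v$ for all $v$. The spectral gap $\lambda_1$ is the smallest nonzero eigenvalue (in modulus) of the Laplacian matrix of $\mathcal{G}$. BGA: given initial values $x_v(0)\in[0,L]$ and a mixing parameter $q\in(0,1)$, at each time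 $t\in\mathbb{Z}_{\ge0}$ one node $v$ is sampled uniformly at random from $\mathcal{V}$ (independently over time); every $u\in\mathcal{N}^+_v$ updates $x_u(t+1)=(1-q)x_u(t)+q\,x_v(t)$, and every $u\notin\mathcal{N}^+_v$ keeps $x_u(t+1)=x_u(t)$. Notation: $x_{\mathrm{ave}}(t)=N^{-1}\sum_v x_v(t)$. *)

theory Defs
  imports "HOL-Probability.Probability"
begin

text \<open>Graphs: vertex set = the finite type 'v, edges E :: ('v \<times> 'v) set.\<close>

definition out_nbhd :: "('v \<times> 'v) set \<Rightarrow> 'v \<Rightarrow> 'v set" where
  "out_nbhd E v = {u. (u, v) \<in> E}"

definition in_nbhd :: "('v \<times> 'v) set \<Rightarrow> 'v \<Rightarrow> 'v set" where
  "in_nbhd E v = {u. (v, u) \<in> E}"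

definition deg_max :: "('v::finite \<times> 'v) set \<Rightarrow> nat" where
  "deg_max E = max (Max (range (\<lambda>v. card (in_nbhd E v)))) (Max (range (\<lambda>v. card (out_nbhd E v))))"

definition symmetric_graph :: "('v \<times> 'v) set \<Rightarrow> bool" where
  "symmetric_graph E \<longleftrightarrow> (\<forall>v. out_nbhd E v = in_nbhd E v)"

definition connected_graph :: "('v \<times> 'v) set \<Rightarrow> bool" where
  "connected_graph E \<longleftrightarrow> (\<forall>u v. (u, v) \<in> E\<^sup>*)"

definition laplacian :: "('v::finite \<times> 'v) set \<Rightarrow> real^'v^'v" where
  "laplacian E = (\<chi> i j. (if i = j then real (card (out_nbhd E i)) else 0)
                         - (if (i, j) \<in> E then 1 else 0))"

definition lap_eigenvalue :: "('v::finite \<times> 'v) set \<Rightarrow> real \<Rightarrow> bool" where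
  "lap_eigenvalue E \<mu> \<longleftrightarrow> (\<exists>x. x \<noteq> 0 \<and> laplacian E *v x = \<mu> *\<^sub>R x)"

definition spectral_gap :: "('v::finite \<times> 'v) set \<Rightarrow> real" where
  "spectral_gap E = Min {\<bar>\<mu>\<bar> | \<mu>. lap_eigenvalue E \<mu> \<and> \<mu> \<noteq> 0}"

definition bga_step :: "('v \<times> 'v) set \<Rightarrow> real \<Rightarrow> ('v \<Rightarrow> real) \<Rightarrow> 'v \<Rightarrow> ('v \<Rightarrow> real)" where
  "bga_step E q x v = (\<lambda>u. if u \<in> out_nbhd E v then (1 - q) * x u + q * x v else x u)"

primrec bga_dist :: "('v::finite \<times> 'v) set \<Rightarrow> real \<Rightarrow> ('v \<Rightarrow> real) \<Rightarrow> nat \<Rightarrow> ('v \<Rightarrow> real) pmf" where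
  "bga_dist E q x0 0 = return_pmf x0"
| "bga_dist E q x0 (Suc t) =
     bind_pmf (bga_dist E q x0 t) (\<lambda>x. map_pmf (bga_step E q x) (pmf_of_set UNIV))"

definition x_ave :: "('v::finite \<Rightarrow> real) \<Rightarrow> real" where
  "x_ave x = (\<Sum>v\<in>UNIV. x v) / real CARD('v)"

definition expected_beta :: "('v::finite \<times> 'v) set \<Rightarrow> real \<Rightarrow> ('v \<Rightarrow> real) \<Rightarrow> nat \<Rightarrow> real" where
  "expected_beta E q x0 t =
     measure_pmf.expectation (bga_dist E q x0 t) (\<lambda>x. \<bar>x_ave x - x_ave x0\<bar>\<^sup>2)"

end

theory Submission
  imports Defs
begin


lemma finite_bga: "finite (set_pmf (bga_dist E q x0 t))"
  by (induction t) (auto simp: set_bind_pmf)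

lemma expect_Suc:
  fixes h :: "('v::finite \<Rightarrow> real) \<Rightarrow> real"
  shows "measure_pmf.expectation (bga_dist E q x0 (Suc t)) h =
     measure_pmf.expectation (bga_dist E q x0 t) (\<lambda>x. (\<Sum>v\<in>UNIV. h (bga_step E q x v)) / real CARD('v))"
proof -
  let ?p = "bga_dist E q x0 t"
  have "measure_pmf.expectation (bga_dist E q x0 (Suc t)) h = (\<Sum>a\<in>set_pmf ?p. pmf ?p a *\<^sub>R measure_pmf.expectation (map_pmf (bga_step E q a) (pmf_of_set UNIV)) h)"
    unfolding bga_dist.simps by (rule pmf_expectation_bind[OF finite_bga]) auto
  also have "\<dots> = (\<Sum>a\<in>set_pmf ?p. pmf ?p a *\<^sub>R ((\<Sum>v\<in>UNIV. h (bga_step E q a v)) / real CARD('v)))"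
    by (simp add: integral_pmf_of_set)
  also have "\<dots> = measure_pmf.expectation ?p (\<lambda>x. (\<Sum>v\<in>UNIV. h (bga_step E q x v)) / real CARD('v))"
    by (rule integral_measure_pmf[symmetric, OF finite_bga]) auto
  finally show ?thesis .
qed

lemma integrable_bga: "integrable (measure_pmf (bga_dist E q x0 t)) (f :: _ \<Rightarrow> real)"
  by (rule integrable_measure_pmf_finite[OF finite_bga])



definition dsum :: "('v::finite \<times> 'v) set \<Rightarrow> ('v \<Rightarrow> real) \<Rightarrow> 'v \<Rightarrow> real" where
  "dsum E x v = (\<Sum>u\<in>UNIV. if (u,v) \<in> E then x v - x u else 0)"
definition Sf :: "('v::finite \<times> 'v) set \<Rightarrow> ('v \<Rightarrow> real) \<Rightarrow> real" where
  "Sf E x = (\<Sum>v\<in>UNIV. \<Sum>u\<in>UNIV. if (u,v) \<in> E then (x v - x u)^2 else 0)"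
definition Wf :: "('v::finite \<Rightarrow> real) \<Rightarrow> real" where
  "Wf x = (\<Sum>u\<in>UNIV. (x u)^2)"

lemma sym_E: "symmetric_graph E \<Longrightarrow> (u,v) \<in> E \<longleftrightarrow> (v,u) \<in> E"
  unfolding symmetric_graph_def out_nbhd_def in_nbhd_def by (metis mem_Collect_eq)

lemma step_sum: "(\<Sum>u\<in>UNIV. bga_step E q x v u) = (\<Sum>u\<in>UNIV. x u) + q * dsum E x v"
proof -
  have "(\<Sum>u\<in>UNIV. bga_step E q x v u) = (\<Sum>u\<in>UNIV. x u + q * (if (u,v) \<in> E then x v - x u else 0))"
    by (rule sum.cong) (auto simp: bga_step_def out_nbhd_def algebra_simps)
  then show ?thesis by (simp add: dsum_def sum.distrib sum_distrib_left)
qed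

lemma ave_step:
  fixes x :: "'v::finite \<Rightarrow> real"
  shows "x_ave (bga_step E q x v) = x_ave x + q * dsum E x v / real CARD('v)"
  unfolding x_ave_def step_sum by (simp add: add_divide_distrib)

lemma dsum_zero:
  assumes "symmetric_graph E"
  shows "(\<Sum>v\<in>UNIV. dsum E x v) = 0"
proof -
  let ?T = "\<Sum>v\<in>UNIV. \<Sum>u\<in>UNIV. if (u,v) \<in> E then x v - x u else (0::real)"
  have "?T = (\<Sum>u\<in>UNIV. \<Sum>v\<in>UNIV. if (u,v) \<in> E then x v - x u else (0::real))"
    by (rule sum.swap)
  also have "\<dots> = (\<Sum>u\<in>UNIV. \<Sum>v\<in>UNIV. - (if (v,u) \<in> E then x u - x v else (0::real)))"
    using sym_E[OF assms] by (intro sum.cong refl) auto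
  also have "\<dots> = - ?T" by (simp add: sum_negf)
  finally have "?T = 0" by simp
  then show ?thesis by (simp add: dsum_def)
qed

lemma dsum_sq:
  fixes E :: "('v::finite \<times> 'v) set"
  shows "(dsum E x v)^2 \<le> real (deg_max E) * (\<Sum>u\<in>UNIV. if (u,v) \<in> E then (x v - x u)^2 else 0)"
proof -
  have A: "dsum E x v = (\<Sum>u\<in>out_nbhd E v. x v - x u)"
    unfolding dsum_def out_nbhd_def by (simp add: sum.inter_filter[symmetric])
  have B: "(\<Sum>u\<in>UNIV. if (u,v) \<in> E then (x v - x u)^2 else 0) = (\<Sum>u\<in>out_nbhd E v. (x v - x u)^2)"
    unfolding out_nbhd_def by (simp add: sum.inter_filter[symmetric])
  have c: "card (out_nbhd E v) \<le> deg_max E"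
    unfolding deg_max_def by (rule le_trans[OF Max_ge max.cobounded2]) auto
  have "(dsum E x v)^2 \<le> (\<Sum>u\<in>out_nbhd E v. (x v - x u)^2) * card (out_nbhd E v)"
    unfolding A by (rule sum_squared_le_sum_of_squares)
  also have "\<dots> \<le> (\<Sum>u\<in>out_nbhd E v. (x v - x u)^2) * deg_max E"
    by (rule mult_left_mono) (use c in \<open>auto intro: sum_nonneg\<close>)
  finally show ?thesis unfolding B by (simp add: mult.commute)
qed

lemma Sf_nonneg: "Sf E x \<ge> 0"
  unfolding Sf_def by (intro sum_nonneg) auto

lemma W_step:
  fixes x :: "'v::finite \<Rightarrow> real"
  assumes "symmetric_graph E"
  shows "(\<Sum>v\<in>UNIV. Wf (bga_step E q x v)) = real CARD('v) * Wf x - q * (1 - q) * Sf E x"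
proof -
  let ?P = "\<Sum>v\<in>UNIV. \<Sum>u\<in>UNIV. if (u,v) \<in> E then x u * (x v - x u) else (0::real)"
  have "?P = (\<Sum>u\<in>UNIV. \<Sum>v\<in>UNIV. if (u,v) \<in> E then x u * (x v - x u) else (0::real))"
    by (rule sum.swap)
  also have "\<dots> = (\<Sum>v\<in>UNIV. \<Sum>u\<in>UNIV. if (u,v) \<in> E then x v * (x u - x v) else (0::real))"
    using sym_E[OF assms] by (intro sum.cong refl) auto
  finally have "2 * ?P = ?P + (\<Sum>v\<in>UNIV. \<Sum>u\<in>UNIV. if (u,v) \<in> E then x v * (x u - x v) else (0::real))"
    by simp
  also have "\<dots> = (\<Sum>v\<in>UNIV. \<Sum>u\<in>UNIV. - (if (u,v) \<in> E then (x v - x u)^2 else (0::real)))"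
    unfolding sum.distrib[symmetric] by (intro sum.cong refl) (auto simp: power2_eq_square algebra_simps)
  also have "\<dots> = - Sf E x" by (simp add: Sf_def sum_negf)
  finally have P: "2 * ?P = - Sf E x" .
  have "(\<Sum>v\<in>UNIV. Wf (bga_step E q x v)) = (\<Sum>v\<in>UNIV. \<Sum>u\<in>UNIV. (x u)^2 +
      (2*q * (if (u,v) \<in> E then x u * (x v - x u) else 0) + q^2 * (if (u,v) \<in> E then (x v - x u)^2 else 0)))"
    unfolding Wf_def by (intro sum.cong refl) (auto simp: bga_step_def out_nbhd_def power2_eq_square algebra_simps)
  also have "\<dots> = real CARD('v) * Wf x + 2*q*?P + q^2 * Sf E x"
    by (simp add: sum.distrib sum_distrib_left Wf_def Sf_def)
  also have "\<dots> = real CARD('v) * Wf x - q * (1 - q) * Sf E x"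
    using P by (simp add: algebra_simps power2_eq_square)
  finally show ?thesis .
qed



lemma beta_step:
  fixes x :: "'v::finite \<Rightarrow> real"
  assumes "symmetric_graph E"
  shows "(\<Sum>v\<in>UNIV. (x_ave (bga_step E q x v) - c)^2) / real CARD('v)
     = (x_ave x - c)^2 + (\<Sum>v\<in>UNIV. (q * dsum E x v / real CARD('v))^2) / real CARD('v)"
proof -
  let ?N = "real CARD('v)"
  have N: "?N > 0" by simp
  have "(\<Sum>v\<in>UNIV. (x_ave (bga_step E q x v) - c)^2) =
     (\<Sum>v\<in>UNIV. (x_ave x - c)^2 + (2 * (x_ave x - c) * q / ?N) * dsum E x v + (q * dsum E x v / ?N)^2)"
    unfolding ave_step by (intro sum.cong refl) (simp add: power2_eq_square field_simps)
  also have "\<dots> = ?N * (x_ave x - c)^2 + (2 * (x_ave x - c) * q / ?N) * (\<Sum>v\<in>UNIV. dsum E x v) + (\<Sum>v\<in>UNIV. (q * dsum E x v / ?N)^2)"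
    by (simp add: sum.distrib sum_distrib_left)
  also have "\<dots> = ?N * (x_ave x - c)^2 + (\<Sum>v\<in>UNIV. (q * dsum E x v / ?N)^2)"
    using dsum_zero[OF assms] by simp
  finally show ?thesis using N by (simp add: field_simps)
qed

lemma G_bound:
  fixes x :: "'v::finite \<Rightarrow> real" and E :: "('v \<times> 'v) set"
  shows "(\<Sum>v\<in>UNIV. (q * dsum E x v / real CARD('v))^2) / real CARD('v)
     \<le> q^2 * real (deg_max E) * Sf E x / (real CARD('v))^3"
proof -
  let ?N = "real CARD('v)"
  have N: "?N > 0" by simp
  have "(\<Sum>v\<in>UNIV. (q * dsum E x v / ?N)^2) = q^2 / ?N^2 * (\<Sum>v\<in>UNIV. (dsum E x v)^2)"
    by (simp add: sum_distrib_left power_divide power_mult_distrib)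
  also have "\<dots> \<le> q^2 / ?N^2 * (\<Sum>v\<in>UNIV. real (deg_max E) * (\<Sum>u\<in>UNIV. if (u,v) \<in> E then (x v - x u)^2 else 0))"
    by (intro mult_left_mono sum_mono dsum_sq) auto
  also have "\<dots> = q^2 / ?N^2 * (real (deg_max E) * Sf E x)"
    by (simp add: Sf_def sum_distrib_left)
  finally have "(\<Sum>v\<in>UNIV. (q * dsum E x v / ?N)^2) \<le> q^2 / ?N^2 * (real (deg_max E) * Sf E x)" .
  then show ?thesis using N by (simp add: field_simps power3_eq_cube power2_eq_square)
qed

lemma G_nonneg: "(\<Sum>v\<in>UNIV. (q * dsum E x v / real CARD('v::finite))^2) / real CARD('v) \<ge> 0"
  by (intro divide_nonneg_nonneg sum_nonneg) auto

lemma main_prob: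
  fixes x0 :: "'v::finite \<Rightarrow> real" and E :: "('v \<times> 'v) set"
  assumes sym: "symmetric_graph E" and q: "0 < q" "q < 1"
  shows "\<exists>l. expected_beta E q x0 \<longlonglongrightarrow> l \<and>
     l \<le> q * real (deg_max E) * Wf x0 / ((1 - q) * (real CARD('v))^2)"
proof -
  let ?N = "real CARD('v)"
  have N: "?N > 0" by simp
  define B where "B t = expected_beta E q x0 t" for t
  define W where "W t = measure_pmf.expectation (bga_dist E q x0 t) Wf" for t
  define S where "S t = measure_pmf.expectation (bga_dist E q x0 t) (Sf E)" for t
  define G where "G x = (\<Sum>v\<in>UNIV. (q * dsum E x v / ?N)^2) / ?N" for x
  define K where "K = q * real (deg_max E) / ((1 - q) * ?N^2)"
  have K0: "K \<ge> 0" unfolding K_def using q by simp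
  have Bs: "B (Suc t) = B t + measure_pmf.expectation (bga_dist E q x0 t) G" for t
  proof -
    have "B (Suc t) = measure_pmf.expectation (bga_dist E q x0 t) (\<lambda>x. (x_ave x - x_ave x0)^2 + G x)"
      unfolding B_def expected_beta_def expect_Suc
      by (simp add: power2_abs beta_step[OF sym] G_def)
    also have "\<dots> = B t + measure_pmf.expectation (bga_dist E q x0 t) G"
      unfolding B_def expected_beta_def
      by (subst Bochner_Integration.integral_add) (auto intro: integrable_bga simp: power2_abs)
    finally show ?thesis .
  qed
  have Ws: "W (Suc t) = W t - q * (1 - q) / ?N * S t" for t
  proof -
    have "W (Suc t) = measure_pmf.expectation (bga_dist E q x0 t) (\<lambda>x. Wf x - q * (1 - q) / ?N * Sf E x)"
      unfolding W_def expect_Suc W_step[OF sym] using N by (simp add: field_simps)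
    also have "\<dots> = W t - q * (1 - q) / ?N * S t"
      unfolding W_def S_def
      by (subst Bochner_Integration.integral_diff) (auto intro: integrable_bga)
    finally show ?thesis .
  qed
  have Gle: "measure_pmf.expectation (bga_dist E q x0 t) G \<le> q^2 * real (deg_max E) / ?N^3 * S t" for t
  proof -
    have "measure_pmf.expectation (bga_dist E q x0 t) G \<le>
        measure_pmf.expectation (bga_dist E q x0 t) (\<lambda>x. q^2 * real (deg_max E) / ?N^3 * Sf E x)"
      by (rule integral_mono) (auto intro: integrable_bga simp: G_def G_bound[simplified])
    then show ?thesis unfolding S_def by simp
  qed
  have Ginc: "B t \<le> B (Suc t)" for t
    unfolding Bs by (simp add: G_def integral_nonneg_AE G_nonneg)
  have dec: "B (Suc t) + K * W (Suc t) \<le> B t + K * W t" for t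
  proof -
    have "q^2 * real (deg_max E) / ?N^3 * S t = K * (q * (1 - q) / ?N * S t)"
      unfolding K_def using q N by (simp add: field_simps power2_eq_square power3_eq_cube)
    then show ?thesis using Gle[of t] unfolding Bs Ws by (simp add: algebra_simps)
  qed
  have B0: "B 0 = 0" unfolding B_def expected_beta_def by simp
  have W0: "W 0 = Wf x0" unfolding W_def by simp
  have Wnn: "W t \<ge> 0" for t unfolding W_def Wf_def by (intro integral_nonneg_AE AE_I2 sum_nonneg) auto
  have bnd: "B t \<le> K * Wf x0" for t
  proof -
    have "B t + K * W t \<le> B 0 + K * W 0"
    proof (induction t)
      case (Suc t) then show ?case using dec[of t] by linarith
    qed simp
    moreover have "K * W t \<ge> 0" using Wnn[of t] K0 by simp
    ultimately show ?thesis unfolding B0 W0 by linarith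
  qed
  have inc: "incseq B" by (rule incseq_SucI) (rule Ginc)
  have bdd: "bdd_above (range B)" by (rule bdd_aboveI[of _ "K * Wf x0"]) (use bnd in auto)
  have lim: "B \<longlonglongrightarrow> (SUP t. B t)" by (rule LIMSEQ_incseq_SUP[OF bdd inc])
  have "(SUP t. B t) \<le> K * Wf x0" by (rule cSUP_least) (auto intro: bnd)
  then show ?thesis using lim unfolding B_def[abs_def] K_def
    by (intro exI[of _ "SUP t. expected_beta E q x0 t"]) (auto simp: mult.commute mult.left_commute)
qed



lemma lap_sym: assumes "symmetric_graph E" shows "laplacian E $ i $ j = laplacian E $ j $ i"
  unfolding laplacian_def using sym_E[OF assms] by auto

lemma mv_inner_sym:
  fixes A :: "real^'n^'n"
  assumes "\<And>i j. A$i$j = A$j$i"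
  shows "(A *v x) \<bullet> y = x \<bullet> (A *v y)"
proof -
  have "(A *v x) \<bullet> y = (\<Sum>i\<in>UNIV. \<Sum>j\<in>UNIV. A$i$j * x$j * y$i)"
    by (simp add: inner_vec_def matrix_vector_mult_def sum_distrib_right)
  also have "\<dots> = (\<Sum>j\<in>UNIV. \<Sum>i\<in>UNIV. A$i$j * x$j * y$i)" by (rule sum.swap)
  also have "\<dots> = x \<bullet> (A *v y)"
    by (simp add: inner_vec_def matrix_vector_mult_def sum_distrib_left assms mult_ac)
  finally show ?thesis .
qed

lemma eig_bound:
  fixes E :: "('v::finite \<times> 'v) set"
  assumes "lap_eigenvalue E \<mu>"
  shows "\<bar>\<mu>\<bar> \<le> 2 * real (deg_max E)"
proof -
  obtain x where x: "x \<noteq> 0" "laplacian E *v x = \<mu> *\<^sub>R x" using assms lap_eigenvalue_def by auto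
  define m where "m = Max (range (\<lambda>j. \<bar>x$j\<bar>))"
  have "m \<in> range (\<lambda>j. \<bar>x$j\<bar>)" unfolding m_def by (rule Max_in) auto
  then obtain i where im: "\<bar>x$i\<bar> = m" by auto
  have i: "\<bar>x$j\<bar> \<le> \<bar>x$i\<bar>" for j unfolding im m_def by (rule Max_ge) auto
  have xi: "\<bar>x$i\<bar> > 0"
  proof (rule ccontr)
    assume "\<not> ?thesis"
    then have "x$j = 0" for j using i[of j] by simp
    then show False using x(1) by (simp add: vec_eq_iff)
  qed
  let ?L = "laplacian E"
  have rowb: "\<bar>?L$i$j\<bar> \<le> (if i = j then real (card (out_nbhd E i)) else 0) + (if (i,j) \<in> E then 1 else 0)" for j
    unfolding laplacian_def by auto
  have c1: "card (out_nbhd E i) \<le> deg_max E"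
    unfolding deg_max_def by (rule le_trans[OF Max_ge max.cobounded2]) auto
  have c2: "card (in_nbhd E i) \<le> deg_max E"
    unfolding deg_max_def by (rule le_trans[OF Max_ge max.cobounded1]) auto
  have cin: "(\<Sum>j\<in>UNIV. (if (i,j) \<in> E then 1 else 0::real)) = real (card (in_nbhd E i))"
    unfolding in_nbhd_def by (simp add: sum.If_cases)
  have "\<bar>\<mu>\<bar> * \<bar>x$i\<bar> = \<bar>(?L *v x)$i\<bar>" using x(2) by (simp add: abs_mult)
  also have "\<dots> = \<bar>\<Sum>j\<in>UNIV. ?L$i$j * x$j\<bar>" by (simp add: matrix_vector_mult_def)
  also have "\<dots> \<le> (\<Sum>j\<in>UNIV. \<bar>?L$i$j\<bar> * \<bar>x$j\<bar>)" by (rule order_trans[OF sum_abs]) (simp add: abs_mult)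
  also have "\<dots> \<le> (\<Sum>j\<in>UNIV. ((if i = j then real (card (out_nbhd E i)) else 0) + (if (i,j) \<in> E then 1 else 0)) * \<bar>x$i\<bar>)"
    by (intro sum_mono mult_mono rowb i) auto
  also have "\<dots> = (real (card (out_nbhd E i)) + real (card (in_nbhd E i))) * \<bar>x$i\<bar>"
    by (simp add: sum_distrib_right[symmetric] sum.distrib cin)
  also have "\<dots> \<le> (2 * real (deg_max E)) * \<bar>x$i\<bar>"
    using c1 c2 xi by (intro mult_right_mono) auto
  finally show ?thesis using xi by simp
qed

lemma finite_eig:
  fixes E :: "('v::finite \<times> 'v) set"
  assumes sym: "symmetric_graph E"
  shows "finite {\<mu>. lap_eigenvalue E \<mu>}"
proof -
  let ?F = "{\<mu>. lap_eigenvalue E \<mu>}"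
  define ev where "ev \<mu> = (SOME x. x \<noteq> 0 \<and> laplacian E *v x = \<mu> *\<^sub>R x)" for \<mu>
  have ev: "ev \<mu> \<noteq> 0 \<and> laplacian E *v ev \<mu> = \<mu> *\<^sub>R ev \<mu>" if "\<mu> \<in> ?F" for \<mu>
    using that unfolding ev_def lap_eigenvalue_def mem_Collect_eq by (rule someI_ex)
  have orth: "ev \<mu> \<bullet> ev \<nu> = 0" if "\<mu> \<in> ?F" "\<nu> \<in> ?F" "\<mu> \<noteq> \<nu>" for \<mu> \<nu>
  proof -
    have "\<mu> * (ev \<mu> \<bullet> ev \<nu>) = (laplacian E *v ev \<mu>) \<bullet> ev \<nu>" using ev[OF that(1)] by simp
    also have "\<dots> = ev \<mu> \<bullet> (laplacian E *v ev \<nu>)" by (rule mv_inner_sym) (rule lap_sym[OF sym])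
    also have "\<dots> = \<nu> * (ev \<mu> \<bullet> ev \<nu>)" using ev[OF that(2)] by simp
    finally show ?thesis using that(3) by simp
  qed
  have inj: "inj_on ev ?F"
  proof (rule inj_onI)
    fix \<mu> \<nu> assume a: "\<mu> \<in> ?F" "\<nu> \<in> ?F" "ev \<mu> = ev \<nu>"
    show "\<mu> = \<nu>"
    proof (rule ccontr)
      assume "\<mu> \<noteq> \<nu>"
      then have "ev \<mu> \<bullet> ev \<mu> = 0" using orth[OF a(1,2)] a(3) by simp
      then show False using ev[OF a(1)] by simp
    qed
  qed
  have po: "pairwise orthogonal (ev ` ?F)"
    unfolding pairwise_def orthogonal_def
  proof (intro ballI impI)
    fix a b assume "a \<in> ev ` ?F" "b \<in> ev ` ?F" "a \<noteq> b"
    then obtain \<mu> \<nu> where "\<mu> \<in> ?F" "\<nu> \<in> ?F" "a = ev \<mu>" "b = ev \<nu>" "\<mu> \<noteq> \<nu>" by blast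
    then show "a \<bullet> b = 0" using orth by simp
  qed
  have "0 \<notin> ev ` ?F" using ev by auto
  then have "independent (ev ` ?F)" by (rule pairwise_orthogonal_independent[OF po])
  then have "finite (ev ` ?F)" by (rule independent_imp_finite)
  then show ?thesis using inj by (rule finite_imageD)
qed



lemma exists_pos_eig:
  fixes E :: "('v::finite \<times> 'v) set"
  assumes sym: "symmetric_graph E" and e: "(u,v) \<in> E" "u \<noteq> v"
  shows "\<exists>M>0. lap_eigenvalue E M"
proof -
  let ?L = "laplacian E"
  have symL: "\<And>i j. ?L$i$j = ?L$j$i" using lap_sym[OF sym] .
  define f where "f z = z \<bullet> (?L *v z)" for z :: "real^'v"
  have cont: "continuous_on (sphere 0 1) f" unfolding f_def
    by (intro continuous_intros linear_continuous_on bounded_linear_inner_left matrix_vector_mul_bounded_linear)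
  have ne: "axis v 1 \<in> sphere (0::real^'v) 1" by simp
  obtain x where x: "x \<in> sphere 0 1" "\<And>y. y \<in> sphere 0 1 \<Longrightarrow> f y \<le> f x"
    using continuous_attains_sup[OF compact_sphere _ cont] ne by blast
  define M where "M = f x"
  have fscale: "f (c *\<^sub>R z) = c^2 * f z" for c z unfolding f_def by (simp add: matrix_vector_mult_scaleR power2_eq_square)
  have Bnn: "f z \<le> M * (z \<bullet> z)" for z
  proof (cases "z = 0")
    case True then show ?thesis by (simp add: f_def)
  next
    case False
    let ?y = "(1 / norm z) *\<^sub>R z"
    have "?y \<in> sphere 0 1" using False by simp
    then have "f ?y \<le> M" using x(2) M_def by blast
    then have "norm z ^2 * f ?y \<le> norm z^2 * M" by (simp add: mult_left_mono)
    moreover have "norm z ^2 * f ?y = f z" using False by (simp add: fscale power_divide)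
    moreover have "z \<bullet> z = norm z ^2" by (simp add: power2_norm_eq_inner)
    ultimately show ?thesis by (simp add: mult.commute)
  qed
  have xx: "x \<bullet> x = 1" using x(1) by (simp add: power2_norm_eq_inner[symmetric])
  define w where "w = M *\<^sub>R x - ?L *v x"
  have xw: "x \<bullet> w = 0" unfolding w_def M_def f_def using xx by (simp add: inner_diff_right)
  have wLx: "w \<bullet> (?L *v x) = - (w \<bullet> w)"
  proof -
    have "w \<bullet> w = w \<bullet> (M *\<^sub>R x) - w \<bullet> (?L *v x)" unfolding w_def[of] by (simp only: inner_diff_right)
    then show ?thesis using xw by (simp add: inner_commute)
  qed
  have expand: "f (x + t *\<^sub>R w) = f x + 2 * t * (w \<bullet> (?L *v x)) + t^2 * f w" for t
  proof -
    have "x \<bullet> (?L *v w) = w \<bullet> (?L *v x)"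
      using mv_inner_sym[OF symL, of w x] by (simp add: inner_commute)
    then show ?thesis unfolding f_def
      by (simp add: matrix_vector_right_distrib matrix_vector_mult_scaleR inner_add_left inner_add_right
          power2_eq_square algebra_simps)
  qed
  have nexp: "(x + t *\<^sub>R w) \<bullet> (x + t *\<^sub>R w) = 1 + t^2 * (w \<bullet> w)" for t
    using xx xw by (simp add: inner_add_left inner_add_right power2_eq_square inner_commute)
  have ineq: "2 * s * (w \<bullet> w) \<le> s^2 * (M * (w \<bullet> w) - f w)" for s
  proof -
    have "f (x + (-s) *\<^sub>R w) \<le> M * ((x + (-s) *\<^sub>R w) \<bullet> (x + (-s) *\<^sub>R w))" by (rule Bnn)
    then show ?thesis unfolding expand nexp wLx M_def by (simp add: algebra_simps power2_eq_square)
  qed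
  have w0: "w = 0"
  proof (rule ccontr)
    assume "w \<noteq> 0"
    then have ww: "w \<bullet> w > 0" by simp
    define c where "c = M * (w \<bullet> w) - f w"
    have c: "c \<ge> 0" unfolding c_def using Bnn[of w] by simp
    define s where "s = (w \<bullet> w) / (c + 1)"
    have s: "s > 0" unfolding s_def using ww c by simp
    have "2 * s * (w \<bullet> w) \<le> s^2 * c" using ineq[of s] unfolding c_def .
    then have "2 * (w \<bullet> w) \<le> s * c" using s by (simp add: power2_eq_square)
    also have "s * c = (w \<bullet> w) * (c / (c + 1))" unfolding s_def by simp
    also have "\<dots> \<le> (w \<bullet> w) * 1" using ww c by (intro mult_left_mono) auto
    finally show False using ww by simp
  qed
  have eig: "?L *v x = M *\<^sub>R x" using w0 unfolding w_def by simp
  have "x \<noteq> 0" using x(1) by auto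
  then have ev: "lap_eigenvalue E M" unfolding lap_eigenvalue_def using eig by blast
  have fa: "f (axis v 1) = ?L$v$v"
    proof -
    have "\<And>i. (if i = v then 1 else 0) * (\<Sum>j\<in>UNIV. ?L $ i $ j * (if j = v then 1 else 0)) = (if i = v then ?L$v$v else (0::real))"
      by (simp add: if_distrib cong: if_cong)
    then show ?thesis unfolding f_def by (simp add: matrix_vector_mult_def axis_def inner_vec_def)
  qed
  have uin: "u \<in> out_nbhd E v" using e unfolding out_nbhd_def by simp
  have pos: "?L$v$v > 0"
  proof (cases "(v,v) \<in> E")
    case True
    then have "{u, v} \<subseteq> out_nbhd E v" using uin unfolding out_nbhd_def by auto
    then have "card {u, v} \<le> card (out_nbhd E v)" by (intro card_mono) auto
    then have "card (out_nbhd E v) \<ge> 2" using e(2) by simp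
    then show ?thesis using True unfolding laplacian_def by simp
  next
    case False
    have "out_nbhd E v \<noteq> {}" using uin by auto
    then have "card (out_nbhd E v) \<ge> 1" by (simp add: Suc_le_eq card_gt_0_iff)
    then show ?thesis using False unfolding laplacian_def by simp
  qed
  have "f (axis v 1) \<le> M * (axis v 1 \<bullet> axis v (1::real))" by (rule Bnn)
  then have "M > 0" using fa pos by (simp add: inner_axis_axis)
  then show ?thesis using ev by blast
qed



lemma nonloop_edge:
  assumes "(u,v) \<in> E\<^sup>*" "u \<noteq> v"
  shows "\<exists>a b. (a,b) \<in> E \<and> a \<noteq> b"
  using assms by (induction rule: rtrancl_induct) auto

lemma two_distinct:
  assumes "CARD('v::finite) \<ge> 2"
  shows "\<exists>u v::'v. u \<noteq> v"
proof (rule ccontr)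
  assume "\<not> ?thesis"
  then have "UNIV = {undefined::'v}" by auto
  then have "CARD('v) = 1" by (metis card.empty card_insert_disjoint empty_iff finite.emptyI One_nat_def)
  then show False using assms by simp
qed

theorem proposition2:
  fixes x0 :: "'v::finite \<Rightarrow> real" and L :: real
  assumes "CARD('v) \<ge> 2"
    and "\<forall>v. 0 \<le> x0 v \<and> x0 v \<le> L"
  shows "\<exists>C > 0. \<forall>(E :: ('v \<times> 'v) set) (q :: real).
           symmetric_graph E \<and> connected_graph E \<and> 0 < q \<and> q < 1 \<longrightarrow>
           (\<exists>beta_inf. expected_beta E q x0 \<longlonglongrightarrow> beta_inf \<and>
              beta_inf \<le> C * (q / (1 - q)) * (real (deg_max E))\<^sup>2
                          / (real CARD('v) * spectral_gap E))"
proof -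
  define W0 where "W0 = Wf x0"
  have W0: "W0 \<ge> 0" unfolding W0_def Wf_def by (intro sum_nonneg) auto
  define C where "C = 2 * W0 + 1"
  have C: "C > 0" unfolding C_def using W0 by simp
  have "\<forall>(E :: ('v \<times> 'v) set) (q :: real).
           symmetric_graph E \<and> connected_graph E \<and> 0 < q \<and> q < 1 \<longrightarrow>
           (\<exists>beta_inf. expected_beta E q x0 \<longlonglongrightarrow> beta_inf \<and>
              beta_inf \<le> C * (q / (1 - q)) * (real (deg_max E))\<^sup>2
                          / (real CARD('v) * spectral_gap E))"
  proof (intro allI impI)
    fix E :: "('v \<times> 'v) set" and q :: real
    assume H: "symmetric_graph E \<and> connected_graph E \<and> 0 < q \<and> q < 1"
    then have sym: "symmetric_graph E" and q: "0 < q" "q < 1" and con: "connected_graph E" by auto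
    obtain l where l: "expected_beta E q x0 \<longlonglongrightarrow> l"
      "l \<le> q * real (deg_max E) * W0 / ((1 - q) * (real CARD('v))^2)"
      using main_prob[OF sym q] unfolding W0_def by blast
    let ?D = "real (deg_max E)" and ?N = "real CARD('v)"
    let ?lam = "spectral_gap E"
    have N: "?N \<ge> 1" by simp
    have "l \<le> C * (q / (1 - q)) * ?D\<^sup>2 / (?N * ?lam)"
    proof (cases "deg_max E = 0")
      case True
      then show ?thesis using l(2) by simp
    next
      case False
      then have D: "?D \<ge> 1" by simp
      obtain u v :: 'v where uv: "u \<noteq> v" using two_distinct[OF assms(1)] by blast
      obtain a b where ab: "(a,b) \<in> E" "a \<noteq> b"
        using nonloop_edge[of u v E] uv con unfolding connected_graph_def by blast
      obtain M where M: "M > 0" "lap_eigenvalue E M" using exists_pos_eig[OF sym ab] by blast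
      let ?S = "{\<bar>\<mu>\<bar> | \<mu>. lap_eigenvalue E \<mu> \<and> \<mu> \<noteq> 0}"
      have Seq: "?S = abs ` {\<mu>. lap_eigenvalue E \<mu> \<and> \<mu> \<noteq> 0}" by auto
      have fin: "finite ?S" unfolding Seq
        by (rule finite_imageI, rule finite_subset[OF _ finite_eig[OF sym]]) auto
      have "M \<in> ?S" using M by force
      then have "?S \<noteq> {}" by auto
      then have "?lam \<in> ?S" unfolding spectral_gap_def by (rule Min_in[OF fin])
      then obtain \<mu> where mu: "?lam = \<bar>\<mu>\<bar>" "lap_eigenvalue E \<mu>" "\<mu> \<noteq> 0" by blast
      have lam: "?lam > 0" "?lam \<le> 2 * ?D" using mu eig_bound[OF mu(2)] by auto
      have a: "q / (1 - q) > 0" using q by simp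
      have key: "W0 * ?lam \<le> C * ?D * ?N"
      proof -
        have "W0 * ?lam \<le> W0 * (2 * ?D)" using lam W0 by (intro mult_left_mono) auto
        also have "\<dots> \<le> C * ?D" unfolding C_def using D by (simp add: algebra_simps)
        also have "\<dots> \<le> C * ?D * ?N" using C D N by simp
        finally show ?thesis .
      qed
      have "q * ?D * W0 / ((1 - q) * ?N^2) = (q / (1 - q)) * ?D * (W0 * ?lam) / (?N^2 * ?lam)"
        using lam q by (simp add: field_simps)
      also have "\<dots> \<le> (q / (1 - q)) * ?D * (C * ?D * ?N) / (?N^2 * ?lam)"
        using key a D lam N q by (intro divide_right_mono mult_left_mono) auto
      also have "\<dots> = C * (q / (1 - q)) * ?D\<^sup>2 / (?N * ?lam)"
        using lam N q by (simp add: field_simps power2_eq_square)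
      finally show ?thesis using l(2) by linarith
    qed
    then show "\<exists>beta_inf. expected_beta E q x0 \<longlonglongrightarrow> beta_inf \<and>
              beta_inf \<le> C * (q / (1 - q)) * ?D\<^sup>2 / (?N * ?lam)" using l(1) by blast
  qed
  then show ?thesis using C by blast
qed

end
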